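(* Let $S$ be a right loop, $\nu:S\to S/\mathcal Z(S)$ the natural projection, and $\theta:G_S\to G_{S/\mathcal Z(S)}$ the induced surjective group homomorphism $f^S(y,z)\mapsto f^{S/\mathcal Z(S)}(\nu(y),\nu(z))$. Then $\ker\theta$ is isomorphic to a subgroup of the abelian group $\prod_{\mathcal A}\mathcal Z(S)$ for some index set $\mathcal A$ (one may take $\mathcal A$ to be a set of representatives of the cosets $\mathcal Z(S)\circ x$ other than $\mathcal Z(S)$).
   Context: A right loop is a set $S$ with binary operation $\circ$ and two-sided identity $1$ such that each equation $X\circ a=b$ has a unique solution. For $y,z\in S$, $f^S(y,z):S\to S$ sends $x$ to the unique $X$ with $X\circ(y\circ z)=(x\circ y)\circ z$; $G_S\le\mathrm{Sym}(S)$ is generated by all $f^S(y,z)$. A congruence on $S$ is an equivalence relation which is a right subloop of $S\times S$; an invariant right subloop is the class $T$ of $1$ under a congruence, $S/T=\{T\circ x\}$ with $(T\circ x)\circ(T\circ y)=T\circ(x\circ y)$. Centralizing: for congruences $\beta,\gamma$, $\gamma$ centralizes $\beta$ if there is a congruence $(\gamma|\beta)$ on the right loop $\beta\subseteq S\times S$ with: (i) $(x,y)(\gamma|\beta)(u,v)\Rightarrow x\gamma u$; (ii) for $(x,y)\in\beta$, $(u,v)\mapsto u$ is a bijection from the $(\gamma|\beta)$-class of $(x,y)$ to the $\gamma$-class of $x$; (iii) $(x,y)\in\gamma\Rightarrow(x,x)(\gamma|\beta)(y,y)$; (iv) $(x,y)(\gamma|\beta)(u,v)\Rightarrow(y,x)(\gamma|\beta)(v,u)$;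 (v) $(x,y)(\gamma|\beta)(u,v)$, $(y,z)(\gamma|\beta)(v,w)\Rightarrow(x,z)(\gamma|\beta)(u,w)$. The center congruence $\zeta(S)$ is the unique maximal congruence centralized by $S\times S$; the center $\mathcal Z(S)$ is its class of $1$, an invariant right subloop which is an abelian group under $\circ$. *)

theory Defs
  imports "HOL-Algebra.Algebra"
begin

definition right_loop :: "'a set \<Rightarrow> ('a \<Rightarrow> 'a \<Rightarrow> 'a) \<Rightarrow> 'a \<Rightarrow> bool" where
  "right_loop S m e \<longleftrightarrow> e \<in> S \<and> (\<forall>x\<in>S. \<forall>y\<in>S. m x y \<in> S)
     \<and> (\<forall>x\<in>S. m e x = x \<and> m x e = x)
     \<and> (\<forall>a\<in>S. \<forall>b\<in>S. \<exists>!w. w \<in> S \<and> m w a = b)"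

definition rdiv :: "'a set \<Rightarrow> ('a \<Rightarrow> 'a \<Rightarrow> 'a) \<Rightarrow> 'a \<Rightarrow> 'a \<Rightarrow> 'a" where
  "rdiv S m b a = (THE w. w \<in> S \<and> m w a = b)"

definition right_subloop :: "'a set \<Rightarrow> ('a \<Rightarrow> 'a \<Rightarrow> 'a) \<Rightarrow> 'a \<Rightarrow> 'a set \<Rightarrow> bool" where
  "right_subloop S m e T \<longleftrightarrow> T \<subseteq> S \<and> right_loop T m e"

definition pmult :: "('a \<Rightarrow> 'a \<Rightarrow> 'a) \<Rightarrow> 'a \<times> 'a \<Rightarrow> 'a \<times> 'a \<Rightarrow> 'a \<times> 'a" where
  "pmult m p q = (m (fst p) (fst q), m (snd p) (snd q))"

definition loop_cong :: "'a set \<Rightarrow> ('a \<Rightarrow> 'a \<Rightarrow> 'a) \<Rightarrow> 'a \<Rightarrow> ('a \<times> 'a) set \<Rightarrow> bool" where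
  "loop_cong S m e R \<longleftrightarrow> equiv S R \<and> right_subloop (S \<times> S) (pmult m) (e, e) R"

definition centralizes ::
  "'a set \<Rightarrow> ('a \<Rightarrow> 'a \<Rightarrow> 'a) \<Rightarrow> 'a \<Rightarrow> ('a \<times> 'a) set \<Rightarrow> ('a \<times> 'a) set \<Rightarrow> bool" where
  "centralizes S m e \<gamma> \<beta> \<longleftrightarrow>
     (\<exists>C. loop_cong \<beta> (pmult m) (e, e) C
       \<and> (\<forall>x y u v. ((x, y), (u, v)) \<in> C \<longrightarrow> (x, u) \<in> \<gamma>)
       \<and> (\<forall>x y. (x, y) \<in> \<beta> \<longrightarrow> bij_betw fst {p. ((x, y), p) \<in> C} {u. (x, u) \<in> \<gamma>})
       \<and> (\<forall>x y. (x, y) \<in> \<gamma> \<longrightarrow> ((x, x), (y, y)) \<in> C)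
       \<and> (\<forall>x y u v. ((x, y), (u, v)) \<in> C \<longrightarrow> ((y, x), (v, u)) \<in> C)
       \<and> (\<forall>x y z u v w. ((x, y), (u, v)) \<in> C \<longrightarrow> ((y, z), (v, w)) \<in> C
            \<longrightarrow> ((x, z), (u, w)) \<in> C))"

definition center_cong :: "'a set \<Rightarrow> ('a \<Rightarrow> 'a \<Rightarrow> 'a) \<Rightarrow> 'a \<Rightarrow> ('a \<times> 'a) set" where
  "center_cong S m e = (THE \<zeta>. loop_cong S m e \<zeta> \<and> centralizes S m e (S \<times> S) \<zeta>
       \<and> (\<forall>\<zeta>'. loop_cong S m e \<zeta>' \<and> centralizes S m e (S \<times> S) \<zeta>' \<and> \<zeta> \<subseteq> \<zeta>' \<longrightarrow> \<zeta>' = \<zeta>))"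

definition center :: "'a set \<Rightarrow> ('a \<Rightarrow> 'a \<Rightarrow> 'a) \<Rightarrow> 'a \<Rightarrow> 'a set" where
  "center S m e = {x. (e, x) \<in> center_cong S m e}"

definition rcoset :: "('a \<Rightarrow> 'a \<Rightarrow> 'a) \<Rightarrow> 'a set \<Rightarrow> 'a \<Rightarrow> 'a set" where
  "rcoset m T x = {m t x | t. t \<in> T}"

definition quot_carrier :: "'a set \<Rightarrow> ('a \<Rightarrow> 'a \<Rightarrow> 'a) \<Rightarrow> 'a set \<Rightarrow> 'a set set" where
  "quot_carrier S m T = {rcoset m T x | x. x \<in> S}"

definition quot_mult :: "'a set \<Rightarrow> ('a \<Rightarrow> 'a \<Rightarrow> 'a) \<Rightarrow> 'a set \<Rightarrow> 'a set \<Rightarrow> 'a set \<Rightarrow> 'a set" where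
  "quot_mult S m T A B =
     rcoset m T (m (SOME x. x \<in> S \<and> A = rcoset m T x) (SOME y. y \<in> S \<and> B = rcoset m T y))"

definition fperm :: "'a set \<Rightarrow> ('a \<Rightarrow> 'a \<Rightarrow> 'a) \<Rightarrow> 'a \<Rightarrow> 'a \<Rightarrow> 'a \<Rightarrow> 'a" where
  "fperm S m y z = (\<lambda>x\<in>S. rdiv S m (m (m x y) z) (m y z))"

definition GS :: "'a set \<Rightarrow> ('a \<Rightarrow> 'a \<Rightarrow> 'a) \<Rightarrow> ('a \<Rightarrow> 'a) monoid" where
  "GS S m = subgroup_generated (BijGroup S) {fperm S m y z | y z. y \<in> S \<and> z \<in> S}"

definition prod_copies :: "'i set \<Rightarrow> 'a set \<Rightarrow> ('a \<Rightarrow> 'a \<Rightarrow> 'a) \<Rightarrow> 'a \<Rightarrow> ('i \<Rightarrow> 'a) monoid" where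
  "prod_copies A Z m e =
     \<lparr>carrier = (\<Pi>\<^sub>E a\<in>A. Z),
      monoid.mult = (\<lambda>g h. \<lambda>a\<in>A. m (g a) (h a)),
      one = (\<lambda>a\<in>A. e)\<rparr>"

end

theory Submission
  imports Defs
begin

locale rl =
  fixes S :: "'a set" and m :: "'a \<Rightarrow> 'a \<Rightarrow> 'a" and e :: 'a
  assumes RL: "right_loop S m e"
begin

lemma e_in[simp]: "e \<in> S" using RL by (simp add: right_loop_def)
lemma cl[simp]: "x \<in> S \<Longrightarrow> y \<in> S \<Longrightarrow> m x y \<in> S" using RL by (simp add: right_loop_def)
lemma lid[simp]: "x \<in> S \<Longrightarrow> m e x = x" using RL by (simp add: right_loop_def)
lemma rid[simp]: "x \<in> S \<Longrightarrow> m x e = x" using RL by (simp add: right_loop_def)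
lemma ex1: "a \<in> S \<Longrightarrow> b \<in> S \<Longrightarrow> \<exists>!w. w \<in> S \<and> m w a = b" using RL by (simp add: right_loop_def)

lemma rcancel: "x \<in> S \<Longrightarrow> y \<in> S \<Longrightarrow> a \<in> S \<Longrightarrow> m x a = m y a \<Longrightarrow> x = y"
  using ex1[of a "m x a"] by auto

lemma rdiv: assumes "a \<in> S" "b \<in> S"
  shows "rdiv S m b a \<in> S \<and> m (rdiv S m b a) a = b"
  unfolding rdiv_def using theI'[OF ex1[OF assms]] .
lemma rdiv_in[simp]: "a \<in> S \<Longrightarrow> b \<in> S \<Longrightarrow> rdiv S m b a \<in> S" using rdiv by blast
lemma rdiv_eq[simp]: "a \<in> S \<Longrightarrow> b \<in> S \<Longrightarrow> m (rdiv S m b a) a = b" using rdiv by blast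
lemma rdiv_unique0: "a \<in> S \<Longrightarrow> w \<in> S \<Longrightarrow> rdiv S m (m w a) a = w"
  using rdiv[of a "m w a"] rcancel[of "rdiv S m (m w a) a" w a] by auto
lemma rdiv_unique: "a \<in> S \<Longrightarrow> w \<in> S \<Longrightarrow> m w a = b \<Longrightarrow> rdiv S m b a = w"
  using rdiv_unique0 by blast

definition Zs where "Zs = {a\<in>S. \<forall>u\<in>S. \<forall>v\<in>S. m (m a u) v = m a (m u v) \<and> m u (m a v) = m a (m u v)}"

lemma Zs_S: "a \<in> Zs \<Longrightarrow> a \<in> S" by (simp add: Zs_def)
lemma A1: "a \<in> Zs \<Longrightarrow> u \<in> S \<Longrightarrow> v \<in> S \<Longrightarrow> m (m a u) v = m a (m u v)" by (simp add: Zs_def)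
lemma A2: "a \<in> Zs \<Longrightarrow> u \<in> S \<Longrightarrow> v \<in> S \<Longrightarrow> m u (m a v) = m a (m u v)" by (simp add: Zs_def)
lemma comm: "a \<in> Zs \<Longrightarrow> u \<in> S \<Longrightarrow> m u a = m a u"
  using A2[of a u e] Zs_S by simp
lemma e_Zs[simp]: "e \<in> Zs" by (simp add: Zs_def)

lemma Zs_mult: assumes a: "a \<in> Zs" and b: "b \<in> Zs" shows "m a b \<in> Zs"
proof -
  have S: "a \<in> S" "b \<in> S" using a b Zs_S by auto
  { fix u v assume u: "u \<in> S" and v: "v \<in> S"
    have "m (m (m a b) u) v = m a (m b (m u v))"
      using A1[OF a] A1[OF b] S u v by simp
    moreover have "m (m a b) (m u v) = m a (m b (m u v))" using A1[OF a] S u v by simp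
    moreover have "m u (m (m a b) v) = m a (m b (m u v))"
      using A1[OF a, of b v] A2[OF a u, of "m b v"] A2[OF b u v] S u v by simp
    ultimately have "m (m (m a b) u) v = m (m a b) (m u v) \<and> m u (m (m a b) v) = m (m a b) (m u v)" by simp }
  thus ?thesis using S by (simp add: Zs_def)
qed

definition zinv where "zinv a = rdiv S m e a"

lemma zinv: assumes a: "a \<in> Zs" shows "zinv a \<in> Zs" "m (zinv a) a = e" "m a (zinv a) = e"
proof -
  have aS: "a \<in> S" using a Zs_S by auto
  let ?c = "zinv a"
  have cS: "?c \<in> S" and ca: "m ?c a = e" using aS by (auto simp: zinv_def)
  show ac: "m a ?c = e" using comm[OF a cS] ca by simp
  have inj: "\<And>x y. x \<in> S \<Longrightarrow> y \<in> S \<Longrightarrow> m a x = m a y \<Longrightarrow> x = y"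
    using comm[OF a] aS rcancel by metis
  { fix u v assume u: "u \<in> S" and v: "v \<in> S"
    have 1: "m a (m ?c u) = u" using A1[OF a cS u] ac u by simp
    have "m a (m (m ?c u) v) = m u v" using A1[OF a, of "m ?c u" v] 1 cS u v by simp
    moreover have "m a (m ?c (m u v)) = m u v" using A1[OF a cS, of "m u v"] ac u v by simp
    ultimately have i: "m (m ?c u) v = m ?c (m u v)" using inj cS u v by simp
    have "m a (m u (m ?c v)) = m u v" using A2[OF a u, of "m ?c v"] A1[OF a cS v] ac cS u v by simp
    hence "m u (m ?c v) = m ?c (m u v)"
      using inj \<open>m a (m ?c (m u v)) = m u v\<close> cS u v by simp
    note i this }
  thus "?c \<in> Zs" using cS by (simp add: Zs_def)
  show "m ?c a = e" by fact
qed

lemma mixed: "a \<in> Zs \<Longrightarrow> b \<in> Zs \<Longrightarrow> u \<in> S \<Longrightarrow> v \<in> S \<Longrightarrow> m (m a u) (m b v) = m (m a b) (m u v)"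
  using A1[of a u "m b v"] A2[of b u v] A1[of a b "m u v"] Zs_S by simp

lemma zdiv: assumes "a \<in> Zs" "b \<in> Zs" shows "m (m b (zinv a)) a = b" "m b (zinv a) \<in> Zs"
  using A1[of b "zinv a" a] zinv[OF assms(1)] assms Zs_S Zs_mult by auto


definition zeta0 where "zeta0 = {(x, m a x) | a x. a \<in> Zs \<and> x \<in> S}"
definition CC where "CC = {((x, m a x), (u, m a u)) | a x u. a \<in> Zs \<and> x \<in> S \<and> u \<in> S}"

lemma zeta0_iff: "(x, y) \<in> zeta0 \<longleftrightarrow> x \<in> S \<and> (\<exists>a\<in>Zs. y = m a x)"
  by (auto simp: zeta0_def)

lemma zeta0_sub: "zeta0 \<subseteq> S \<times> S" using Zs_S by (auto simp: zeta0_def)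

lemma zpm: "a \<in> Zs \<Longrightarrow> b \<in> Zs \<Longrightarrow> x \<in> S \<Longrightarrow> w \<in> S \<Longrightarrow>
   pmult m (w, m b w) (x, m a x) = (m w x, m (m b a) (m w x))"
  by (simp add: pmult_def mixed)

lemma zcancel: "a \<in> Zs \<Longrightarrow> b \<in> Zs \<Longrightarrow> u \<in> S \<Longrightarrow> m a u = m b u \<Longrightarrow> a = b"
  using rcancel Zs_S by blast

lemma equiv_zeta0: "equiv S zeta0"
proof (rule equivI)
  show "refl_on S zeta0" unfolding refl_on_def zeta0_iff
    by (metis e_Zs e_in lid)
  show "sym zeta0"
  proof (rule symI)
    fix x y assume "(x, y) \<in> zeta0"
    then obtain a where a: "a \<in> Zs" "x \<in> S" "y = m a x" by (auto simp: zeta0_iff)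
    have "m (zinv a) y = x" using A1[OF zinv(1)[OF a(1)], of a x] zinv[OF a(1)] a Zs_S by simp
    thus "(y, x) \<in> zeta0" using a zinv(1)[OF a(1)] Zs_S unfolding zeta0_iff by (metis cl)
  qed
  show "trans zeta0"
  proof (rule transI)
    fix x y z assume "(x, y) \<in> zeta0" "(y, z) \<in> zeta0"
    then obtain a b where a: "a \<in> Zs" "x \<in> S" "y = m a x" "b \<in> Zs" "z = m b y" by (auto simp: zeta0_iff)
    hence "z = m (m b a) x" using A1[of b a x] Zs_S by simp
    thus "(x, z) \<in> zeta0" using a Zs_mult by (auto simp: zeta0_iff)
  qed
qed (rule zeta0_sub)

lemma rloop_zeta0: "right_loop zeta0 (pmult m) (e, e)"
  unfolding right_loop_def
proof (intro conjI ballI)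
  show "(e, e) \<in> zeta0" unfolding zeta0_iff by (metis e_Zs e_in lid)
  fix p q assume p: "p \<in> zeta0" and q: "q \<in> zeta0"
  obtain x a where P: "p = (x, m a x)" "a \<in> Zs" "x \<in> S" using p by (auto simp: zeta0_def)
  obtain y b where Q: "q = (y, m b y)" "b \<in> Zs" "y \<in> S" using q by (auto simp: zeta0_def)
  show "pmult m p q \<in> zeta0" using zpm[of b a y x] P Q Zs_mult by (auto simp: zeta0_iff)
  let ?w1 = "rdiv S m y x" and ?c = "m b (zinv a)"
  have c: "?c \<in> Zs" "m ?c a = b" using zdiv P Q by auto
  have w: "(?w1, m ?c ?w1) \<in> zeta0" using c P Q by (auto simp: zeta0_iff)
  have sol: "pmult m (?w1, m ?c ?w1) p = q" using zpm[of a ?c x ?w1] c P Q by simp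
  show "\<exists>!w. w \<in> zeta0 \<and> pmult m w p = q"
  proof (rule ex1I[of _ "(?w1, m ?c ?w1)"])
    show "(?w1, m ?c ?w1) \<in> zeta0 \<and> pmult m (?w1, m ?c ?w1) p = q" using w sol by simp
    fix w' assume "w' \<in> zeta0 \<and> pmult m w' p = q"
    then obtain w1 w2 where w': "w' = (w1, w2)" "w1 \<in> S" "w2 \<in> S" "pmult m w' p = q"
      using zeta0_sub by auto
    have "p \<in> S \<times> S" using p zeta0_sub by auto
    with w' sol w zeta0_sub show "w' = (?w1, m ?c ?w1)"
      by (cases p) (auto simp: pmult_def intro: rcancel)
  qed
next
  fix p assume "p \<in> zeta0"
  thus "pmult m (e, e) p = p" "pmult m p (e, e) = p" using zeta0_sub by (auto simp: pmult_def)
qed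

lemma cong_zeta0: "loop_cong S m e zeta0"
  unfolding loop_cong_def right_subloop_def using equiv_zeta0 rloop_zeta0 zeta0_sub by blast


lemma CC_iff: "((x, y), (u, v)) \<in> CC \<longleftrightarrow> x \<in> S \<and> u \<in> S \<and> (\<exists>a\<in>Zs. y = m a x \<and> v = m a u)"
  by (auto simp: CC_def)

lemma CC_sub: "CC \<subseteq> zeta0 \<times> zeta0" by (auto simp: CC_def zeta0_def)

lemma zinv_app: "a \<in> Zs \<Longrightarrow> x \<in> S \<Longrightarrow> m (zinv a) (m a x) = x"
  using A1[OF zinv(1), of a a x] zinv[of a] Zs_S by simp

lemma equiv_CC: "equiv zeta0 CC"
proof (rule equivI)
  show "refl_on zeta0 CC" unfolding refl_on_def by (auto simp: zeta0_def CC_iff)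
  show "sym CC"
  proof (rule symI)
    fix p q assume "(p, q) \<in> CC"
    then obtain a x u where a: "a \<in> Zs" "x \<in> S" "u \<in> S" "p = (x, m a x)" "q = (u, m a u)" by (auto simp: CC_def)
    show "(q, p) \<in> CC" using a by (auto simp: CC_iff)
  qed
  show "trans CC"
  proof (rule transI)
    fix p q r assume "(p, q) \<in> CC" "(q, r) \<in> CC"
    then obtain a x u b u' w where a: "a \<in> Zs" "x \<in> S" "u \<in> S" "p = (x, m a x)" "q = (u, m a u)"
      and b: "b \<in> Zs" "u' \<in> S" "w \<in> S" "q = (u', m b u')" "r = (w, m b w)" by (auto simp: CC_def)
    have "a = b" using a b zcancel by auto
    thus "(p, r) \<in> CC" using a b by (auto simp: CC_iff)
  qed
qed (rule CC_sub)

lemma rloop_CC: "right_loop CC (pmult (pmult m)) ((e, e), (e, e))"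
  unfolding right_loop_def
proof (intro conjI ballI)
  show "((e, e), (e, e)) \<in> CC" unfolding CC_iff by (auto intro!: bexI[of _ e])
  fix p q assume p: "p \<in> CC" and q: "q \<in> CC"
  obtain x a u where P: "p = ((x, m a x), (u, m a u))" "a \<in> Zs" "x \<in> S" "u \<in> S" using p by (auto simp: CC_def)
  obtain y b v where Q: "q = ((y, m b y), (v, m b v))" "b \<in> Zs" "y \<in> S" "v \<in> S" using q by (auto simp: CC_def)
  show "pmult (pmult m) p q \<in> CC" using zpm[of b a y x] zpm[of b a v u] P Q Zs_mult
    by (auto simp: CC_iff pmult_def[of "pmult m"])
  let ?w1 = "rdiv S m y x" and ?w2 = "rdiv S m v u" and ?c = "m b (zinv a)"
  have c: "?c \<in> Zs" "m ?c a = b" using zdiv P Q by auto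
  have w: "((?w1, m ?c ?w1), (?w2, m ?c ?w2)) \<in> CC" using c P Q by (auto simp: CC_iff)
  have sol: "pmult (pmult m) ((?w1, m ?c ?w1), (?w2, m ?c ?w2)) p = q"
    using zpm[of a ?c x ?w1] zpm[of a ?c u ?w2] c P Q by (simp add: pmult_def[of "pmult m"])
  show "\<exists>!w. w \<in> CC \<and> pmult (pmult m) w p = q"
  proof (rule ex1I[of _ "((?w1, m ?c ?w1), (?w2, m ?c ?w2))"])
    show "((?w1, m ?c ?w1), (?w2, m ?c ?w2)) \<in> CC \<and> pmult (pmult m) ((?w1, m ?c ?w1), (?w2, m ?c ?w2)) p = q"
      using w sol by simp
    fix w' assume "w' \<in> CC \<and> pmult (pmult m) w' p = q"
    then obtain w1 b' w2 where w': "w' = ((w1, m b' w1), (w2, m b' w2))" "b' \<in> Zs" "w1 \<in> S" "w2 \<in> S"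
        "pmult (pmult m) w' p = q"
      by (auto simp: CC_def)
    have eqs: "m w1 x = y" "m w2 u = v" "m (m b' w1) (m a x) = m b y"
      using w'(5) P Q unfolding w' by (auto simp: pmult_def)
    have 1: "w1 = ?w1" using eqs P Q w' rdiv_unique[of x w1 y] by simp
    have 2: "w2 = ?w2" using eqs P Q w' rdiv_unique[of u w2 v] by simp
    have "m (m b' a) (m w1 x) = m b y" using eqs(3) mixed[of b' a w1 x] P w' by simp
    hence "m b' a = b" using eqs(1) zcancel[of "m b' a" b y] Zs_mult P Q w' by simp
    hence "b' = ?c" using c rcancel[of b' ?c a] P w' Zs_S by simp
    thus "w' = ((?w1, m ?c ?w1), (?w2, m ?c ?w2))" using 1 2 w' by simp
  qed
next
  fix p assume "p \<in> CC"
  thus "pmult (pmult m) ((e, e), (e, e)) p = p" "pmult (pmult m) p ((e, e), (e, e)) = p"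
    using Zs_S by (auto simp: pmult_def CC_def)
qed

lemma centr_zeta0: "centralizes S m e (S \<times> S) zeta0"
  unfolding centralizes_def
proof (intro exI[of _ CC] conjI allI impI)
  show "loop_cong zeta0 (pmult m) (e, e) CC"
    unfolding loop_cong_def right_subloop_def using equiv_CC rloop_CC CC_sub by blast
  fix x y u v assume "((x, y), (u, v)) \<in> CC"
  thus "(x, u) \<in> S \<times> S" by (auto simp: CC_iff)
next
  fix x y assume "(x, y) \<in> zeta0"
  then obtain a where a: "a \<in> Zs" "x \<in> S" "y = m a x" by (auto simp: zeta0_iff)
  have "{p. ((x, y), p) \<in> CC} = (\<lambda>u. (u, m a u)) ` S"
  proof (intro equalityI subsetI)
    fix p assume "p \<in> {p. ((x, y), p) \<in> CC}"
    then obtain u v where "p = (u, v)" "((x, y), (u, v)) \<in> CC" by (cases p) auto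
    then obtain b where "u \<in> S" "b \<in> Zs" "y = m b x" "v = m b u" by (auto simp: CC_iff)
    hence "b = a" using a zcancel[of b a x] by simp
    thus "p \<in> (\<lambda>u. (u, m a u)) ` S" using \<open>p = (u, v)\<close> \<open>u \<in> S\<close> \<open>v = m b u\<close> by auto
  next
    fix p assume "p \<in> (\<lambda>u. (u, m a u)) ` S"
    thus "p \<in> {p. ((x, y), p) \<in> CC}" using a by (auto simp: CC_iff)
  qed
  moreover have "{u. (x, u) \<in> S \<times> S} = S" using a by auto
  ultimately show "bij_betw fst {p. ((x, y), p) \<in> CC} {u. (x, u) \<in> S \<times> S}"
    by (simp add: bij_betw_def inj_on_def image_image)
next
  fix x y assume "(x, y) \<in> S \<times> S"
  thus "((x, x), (y, y)) \<in> CC" unfolding CC_iff by (auto intro!: bexI[of _ e])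
next
  fix x y u v assume "((x, y), (u, v)) \<in> CC"
  then obtain a where a: "a \<in> Zs" "x \<in> S" "u \<in> S" "y = m a x" "v = m a u" by (auto simp: CC_iff)
  have "x = m (zinv a) y" "u = m (zinv a) v" using zinv_app a by auto
  thus "((y, x), (v, u)) \<in> CC" unfolding CC_iff using a zinv(1)[OF a(1)] Zs_S by (auto intro!: bexI[of _ "zinv a"])
next
  fix x y z u v w assume "((x, y), (u, v)) \<in> CC" "((y, z), (v, w)) \<in> CC"
  then obtain a b where a: "a \<in> Zs" "x \<in> S" "u \<in> S" "y = m a x" "v = m a u"
     "b \<in> Zs" "z = m b y" "w = m b v" by (auto simp: CC_iff)
  hence "z = m (m b a) x" "w = m (m b a) u" using A1[of b a] Zs_S by auto
  thus "((x, z), (u, w)) \<in> CC" using a Zs_mult by (auto simp: CC_iff)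
qed


lemma max_zeta0:
  assumes L: "loop_cong S m e Z" and C: "centralizes S m e (S \<times> S) Z"
  shows "Z \<subseteq> zeta0"
proof
  fix p assume p: "p \<in> Z"
  have Zsub: "Z \<subseteq> S \<times> S" and eqZ: "equiv S Z" and RZ: "right_loop Z (pmult m) (e, e)"
    using L by (auto simp: loop_cong_def right_subloop_def)
  obtain x y where xy: "p = (x, y)" by (cases p)
  have xS: "x \<in> S" and yS: "y \<in> S" using p xy Zsub by auto
  have xx: "(x, x) \<in> Z" using eqZ xS by (auto simp: equiv_def refl_on_def)
  let ?a = "rdiv S m y x"
  have aS: "?a \<in> S" and ay: "m ?a x = y" using xS yS by auto
  obtain w where w: "w \<in> Z" "pmult m w (x, x) = (x, y)"
    using RZ xx p xy unfolding right_loop_def by metis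
  obtain w1 w2 where ww: "w = (w1, w2)" "w1 \<in> S" "w2 \<in> S" using w Zsub by auto
  have "m w1 x = x" "m w2 x = y" using w(2) ww by (auto simp: pmult_def)
  hence "w1 = e" "w2 = ?a" using rcancel[of w1 e x] rdiv_unique[of x w2 y] ww xS by auto
  hence ea: "(e, ?a) \<in> Z" using w ww by simp
  obtain CR where CR: "loop_cong Z (pmult m) (e, e) CR"
    "\<And>x y. (x, y) \<in> Z \<Longrightarrow> bij_betw fst {p. ((x, y), p) \<in> CR} {u. (x, u) \<in> S \<times> S}"
    "\<And>x y. (x, y) \<in> S \<times> S \<Longrightarrow> ((x, x), (y, y)) \<in> CR"
    using C unfolding centralizes_def by blast
  have eqC: "equiv Z CR" and RC: "right_loop CR (pmult (pmult m)) ((e, e), (e, e))"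
    using CR(1) by (auto simp: loop_cong_def right_subloop_def)
  have clC: "\<And>P Q. P \<in> CR \<Longrightarrow> Q \<in> CR \<Longrightarrow> pmult (pmult m) P Q \<in> CR"
    using RC by (simp add: right_loop_def)
  have refl: "((e, ?a), (e, ?a)) \<in> CR" using eqC ea by (auto simp: equiv_def refl_on_def)
  have ee: "\<And>u. u \<in> S \<Longrightarrow> ((e, e), (u, u)) \<in> CR" using CR(3) by simp
  have star: "\<And>u. u \<in> S \<Longrightarrow> ((e, ?a), (u, m ?a u)) \<in> CR"
  proof -
    fix u assume u: "u \<in> S"
    have "pmult (pmult m) ((e, ?a), (e, ?a)) ((e, e), (u, u)) = ((e, ?a), (u, m ?a u))"
      using aS u by (simp add: pmult_def)
    thus "((e, ?a), (u, m ?a u)) \<in> CR" using clC[OF refl ee[OF u]] by simp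
  qed
  have inj: "inj_on fst {p. ((e, ?a), p) \<in> CR}" using CR(2)[OF ea] by (simp add: bij_betw_def)
  have aZ: "?a \<in> Zs"
  proof -
    { fix u v assume u: "u \<in> S" and v: "v \<in> S"
      have s1: "((e, ?a), (m u v, m ?a (m u v))) \<in> CR" using star u v by simp
      have "pmult (pmult m) ((e, e), (u, u)) ((e, ?a), (v, m ?a v)) = ((e, ?a), (m u v, m u (m ?a v)))"
        using aS u v by (simp add: pmult_def)
      hence s2: "((e, ?a), (m u v, m u (m ?a v))) \<in> CR" using clC[OF ee[OF u] star[OF v]] by simp
      have "pmult (pmult m) ((e, ?a), (u, m ?a u)) ((e, e), (v, v)) = ((e, ?a), (m u v, m (m ?a u) v))"
        using aS u v by (simp add: pmult_def)
      hence s3: "((e, ?a), (m u v, m (m ?a u) v)) \<in> CR" using clC[OF star[OF u] ee[OF v]] by simp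
      have "m (m ?a u) v = m ?a (m u v)" using inj_onD[OF inj, of "(m u v, m (m ?a u) v)" "(m u v, m ?a (m u v))"] s1 s3 by simp
      moreover have "m u (m ?a v) = m ?a (m u v)" using inj_onD[OF inj, of "(m u v, m u (m ?a v))" "(m u v, m ?a (m u v))"] s1 s2 by simp
      ultimately have "m (m ?a u) v = m ?a (m u v) \<and> m u (m ?a v) = m ?a (m u v)" by simp }
    thus ?thesis using aS by (simp add: Zs_def)
  qed
  have "(x, y) \<in> zeta0" unfolding zeta0_iff using aZ ay xS by (intro conjI bexI[of _ ?a]) auto
  thus "p \<in> zeta0" using xy by simp
qed

lemma center_cong_eq: "center_cong S m e = zeta0"
  unfolding center_cong_def
proof (rule the_equality)
  show "loop_cong S m e zeta0 \<and> centralizes S m e (S \<times> S) zeta0 \<and>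
    (\<forall>\<zeta>'. loop_cong S m e \<zeta>' \<and> centralizes S m e (S \<times> S) \<zeta>' \<and> zeta0 \<subseteq> \<zeta>' \<longrightarrow> \<zeta>' = zeta0)"
    using cong_zeta0 centr_zeta0 max_zeta0 by blast
  fix Z assume "loop_cong S m e Z \<and> centralizes S m e (S \<times> S) Z \<and>
    (\<forall>\<zeta>'. loop_cong S m e \<zeta>' \<and> centralizes S m e (S \<times> S) \<zeta>' \<and> Z \<subseteq> \<zeta>' \<longrightarrow> \<zeta>' = Z)"
  thus "Z = zeta0" using cong_zeta0 centr_zeta0 max_zeta0 by metis
qed

lemma center_eq: "center S m e = Zs"
proof -
  have "\<And>x. (e, x) \<in> zeta0 \<longleftrightarrow> x \<in> Zs"
    using Zs_S by (auto simp: zeta0_iff)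
  thus ?thesis by (simp add: center_def center_cong_eq)
qed


abbreviation nu where "nu \<equiv> rcoset m Zs"

lemma nu_mem: "x \<in> S \<Longrightarrow> x \<in> nu x"
  unfolding rcoset_def by (auto intro!: exI[of _ e])

lemma nu_iff: "y \<in> nu x \<longleftrightarrow> (\<exists>t\<in>Zs. y = m t x)" unfolding rcoset_def by auto

lemma nu_eq_iff: assumes x: "x \<in> S" and y: "y \<in> S"
  shows "nu x = nu y \<longleftrightarrow> (\<exists>t\<in>Zs. y = m t x)"
proof
  assume "nu x = nu y" thus "\<exists>t\<in>Zs. y = m t x" using nu_mem[OF y] nu_iff by auto
next
  assume "\<exists>t\<in>Zs. y = m t x"
  then obtain t where t: "t \<in> Zs" "y = m t x" by auto
  show "nu x = nu y"
  proof (intro equalityI subsetI)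
    fix z assume "z \<in> nu x"
    then obtain s where s: "s \<in> Zs" "z = m s x" by (auto simp: nu_iff)
    let ?c = "m s (zinv t)"
    have "m ?c (m t x) = m (m ?c t) x" using A1[of ?c t x] zdiv[OF t(1) s(1)] t x Zs_S by simp
    also have "\<dots> = z" using zdiv[OF t(1) s(1)] s by simp
    finally show "z \<in> nu y" using t zdiv[OF t(1) s(1)] by (auto simp: nu_iff)
  next
    fix z assume "z \<in> nu y"
    then obtain s where s: "s \<in> Zs" "z = m s y" by (auto simp: nu_iff)
    hence "z = m (m s t) x" using A1[of s t x] t x Zs_S by simp
    thus "z \<in> nu x" using Zs_mult[OF s(1) t(1)] by (auto simp: nu_iff)
  qed
qed

lemma nu_cong: "a \<in> S \<Longrightarrow> a' \<in> S \<Longrightarrow> b \<in> S \<Longrightarrow> b' \<in> S \<Longrightarrow> nu a = nu a' \<Longrightarrow> nu b = nu b'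
   \<Longrightarrow> nu (m a b) = nu (m a' b')"
proof -
  assume as: "a \<in> S" "a' \<in> S" "b \<in> S" "b' \<in> S" "nu a = nu a'" "nu b = nu b'"
  obtain t where t: "t \<in> Zs" "a' = m t a" using nu_eq_iff as by blast
  obtain s where s: "s \<in> Zs" "b' = m s b" using nu_eq_iff as by blast
  have "m a' b' = m (m t s) (m a b)" using mixed[of t s a b] t s as by simp
  moreover have "m a b \<in> S" "m a' b' \<in> S" using as by auto
  ultimately show ?thesis using nu_eq_iff[of "m a b" "m a' b'"] Zs_mult[OF t(1) s(1)] by blast
qed

abbreviation Qc where "Qc \<equiv> quot_carrier S m Zs"
abbreviation mQl where "mQl \<equiv> quot_mult S m Zs"

lemma Qc_eq: "Qc = nu ` S" by (auto simp: quot_carrier_def)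

lemma mQ_nu: assumes a: "a \<in> S" and b: "b \<in> S" shows "mQl (nu a) (nu b) = nu (m a b)"
proof -
  let ?x = "SOME x. x \<in> S \<and> nu a = nu x" and ?y = "SOME y. y \<in> S \<and> nu b = nu y"
  have x: "?x \<in> S \<and> nu a = nu ?x" by (rule someI[of _ a]) (use a in auto)
  have y: "?y \<in> S \<and> nu b = nu ?y" by (rule someI[of _ b]) (use b in auto)
  show ?thesis unfolding quot_mult_def using nu_cong[of ?x a ?y b] x y a b by simp
qed

lemma fperm_S: assumes "x \<in> S" "y \<in> S" "z \<in> S"
  shows "fperm S m y z x \<in> S" "m (fperm S m y z x) (m y z) = m (m x y) z"
  using assms by (auto simp: fperm_def)

lemma fperm_comm: assumes t: "t \<in> Zs" and x: "x \<in> S" and y: "y \<in> S" and z: "z \<in> S"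
  shows "fperm S m y z (m t x) = m t (fperm S m y z x)"
proof -
  have tS: "t \<in> S" using t Zs_S by auto
  have "m (m t (fperm S m y z x)) (m y z) = m t (m (m x y) z)"
    using A1[OF t, of "fperm S m y z x" "m y z"] fperm_S[OF x y z] y z by simp
  also have "\<dots> = m (m (m t x) y) z" using A1[OF t x y] A1[OF t, of "m x y" z] x y z by simp
  finally show ?thesis using fperm_S[OF _ y z, of "m t x"] tS x y z
    by (simp add: fperm_def rdiv_unique)
qed

lemma fpermQ: assumes x: "x \<in> S" and y: "y \<in> S" and z: "z \<in> S"
  shows "fperm Qc mQl (nu y) (nu z) (nu x) = nu (fperm S m y z x)"
proof -
  let ?w = "fperm S m y z x"
  have wS: "?w \<in> S" and wq: "m ?w (m y z) = m (m x y) z" using fperm_S[OF x y z] by auto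
  have "rdiv Qc mQl (nu (m (m x y) z)) (nu (m y z)) = nu ?w"
    unfolding rdiv_def
  proof (rule the_equality)
    show "nu ?w \<in> Qc \<and> mQl (nu ?w) (nu (m y z)) = nu (m (m x y) z)"
      using wS wq mQ_nu[OF wS, of "m y z"] y z by (auto simp: Qc_eq)
    fix W assume W: "W \<in> Qc \<and> mQl W (nu (m y z)) = nu (m (m x y) z)"
    then obtain w' where w': "w' \<in> S" "W = nu w'" by (auto simp: Qc_eq)
    have "nu (m w' (m y z)) = nu (m ?w (m y z))" using W w' mQ_nu[OF w'(1), of "m y z"] y z wq by simp
    then obtain t where t: "t \<in> Zs" "m ?w (m y z) = m t (m w' (m y z))"
      using nu_eq_iff[of "m w' (m y z)" "m ?w (m y z)"] w' wS y z by auto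
    hence "m ?w (m y z) = m (m t w') (m y z)" using A1[of t w' "m y z"] w' y z by simp
    hence "?w = m t w'" using rcancel[of ?w "m t w'" "m y z"] wS w' t Zs_S y z by simp
    thus "W = nu ?w" using nu_eq_iff[OF w'(1) wS] t w' by auto
  qed
  thus ?thesis using x y z mQ_nu by (simp add: fperm_def Qc_eq)
qed


lemma carrier_Bij: "carrier (BijGroup A) = Bij A" by (simp add: BijGroup_def)

lemma GS_Bij: "g \<in> carrier (GS S m) \<Longrightarrow> g \<in> Bij S"
  using group.carrier_subgroup_generated_subset[OF group_BijGroup] unfolding GS_def
  by (auto simp: BijGroup_def)

lemma Bij_app: "g \<in> Bij S \<Longrightarrow> x \<in> S \<Longrightarrow> g x \<in> S"
  using Bij_imp_funcset by blast

lemma Bij_mult: "g \<in> Bij A \<Longrightarrow> h \<in> Bij A \<Longrightarrow> g \<otimes>\<^bsub>BijGroup A\<^esub> h = compose A g h"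
  by (simp add: BijGroup_def)

lemma Bij_inv_app: assumes g: "g \<in> Bij A" and x: "x \<in> A"
  shows "(inv\<^bsub>BijGroup A\<^esub> g) x \<in> A" "g ((inv\<^bsub>BijGroup A\<^esub> g) x) = x"
proof -
  have b: "bij_betw g A A" using g by (simp add: Bij_def)
  show "(inv\<^bsub>BijGroup A\<^esub> g) x \<in> A" using inv_BijGroup[OF g] x Bij_inv_into_mem[OF g x] by simp
  show "g ((inv\<^bsub>BijGroup A\<^esub> g) x) = x" using inv_BijGroup[OF g] x b
    by (simp add: bij_betw_def f_inv_into_f)
qed

lemma Bij_inv_eq: assumes g: "g \<in> Bij A" and x: "x \<in> A" and y: "y \<in> A" and gy: "g y = x"
  shows "(inv\<^bsub>BijGroup A\<^esub> g) x = y"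
proof -
  have b: "bij_betw g A A" using g by (simp add: Bij_def)
  show ?thesis using inv_BijGroup[OF g] x b gy y
    by (auto simp: bij_betw_def inv_into_f_f)
qed

lemma comm_G: assumes "g \<in> carrier (GS S m)"
  shows "\<forall>t\<in>Zs. \<forall>x\<in>S. g (m t x) = m t (g x)"
  using assms unfolding GS_def carrier_subgroup_generated
proof (induction rule: generate.induct)
  case one thus ?case using Zs_S by (simp add: BijGroup_def)
next
  case (incl h)
  then obtain y z where "h = fperm S m y z" "y \<in> S" "z \<in> S" by blast
  thus ?case using fperm_comm by simp
next
  case (inv h)
  have hB: "h \<in> Bij S" using inv by (simp add: carrier_Bij)
  obtain y z where "h = fperm S m y z" "y \<in> S" "z \<in> S" using inv by blast
  hence hc: "\<forall>t\<in>Zs. \<forall>x\<in>S. h (m t x) = m t (h x)" using fperm_comm by simp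
  show ?case
  proof (intro ballI)
    fix t x assume t: "t \<in> Zs" and x: "x \<in> S"
    let ?x' = "(inv\<^bsub>BijGroup S\<^esub> h) x"
    have x': "?x' \<in> S" "h ?x' = x" using Bij_inv_app[OF hB x] by auto
    have "h (m t ?x') = m t x" using hc t x' by simp
    thus "(inv\<^bsub>BijGroup S\<^esub> h) (m t x) = m t ?x'"
      using Bij_inv_eq[OF hB, of "m t x" "m t ?x'"] t x x' Zs_S by simp
  qed
next
  case (eng h1 h2)
  have B: "h1 \<in> Bij S" "h2 \<in> Bij S"
    using group.generate_in_carrier[OF group_BijGroup Int_lower1 eng.hyps(1)]
      group.generate_in_carrier[OF group_BijGroup Int_lower1 eng.hyps(2)]
    by (simp_all add: carrier_Bij)
  show ?case using eng.IH B Bij_app Zs_S by (simp add: Bij_mult compose_def)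
qed

lemma theta_rel:
  assumes hom: "\<theta> \<in> hom (GS S m) (GS Qc mQl)"
    and gens: "\<And>y z. y \<in> S \<Longrightarrow> z \<in> S \<Longrightarrow> \<theta> (fperm S m y z) = fperm Qc mQl (nu y) (nu z)"
    and g: "g \<in> carrier (GS S m)"
  shows "\<forall>x\<in>S. \<theta> g (nu x) = nu (g x)"
proof -
  have G1: "group (GS S m)" unfolding GS_def by (rule group.group_subgroup_generated[OF group_BijGroup])
  have G2: "group (GS Qc mQl)" unfolding GS_def by (rule group.group_subgroup_generated[OF group_BijGroup])
  have GH: "group_hom (GS S m) (GS Qc mQl) \<theta>"
    using G1 G2 hom by (simp add: group_hom_def group_hom_axioms_def)
  have BQ: "\<And>F. F \<in> carrier (GS Qc mQl) \<Longrightarrow> F \<in> Bij Qc"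
    using group.carrier_subgroup_generated_subset[OF group_BijGroup] unfolding GS_def carrier_Bij
    by blast
  have gen_case: "\<And>h. h \<in> carrier (BijGroup S) \<inter> {fperm S m y z |y z. y \<in> S \<and> z \<in> S} \<Longrightarrow>
       \<forall>x\<in>S. \<theta> h (nu x) = nu (h x)"
  proof -
    fix h assume "h \<in> carrier (BijGroup S) \<inter> {fperm S m y z |y z. y \<in> S \<and> z \<in> S}"
    then obtain y z where "h = fperm S m y z" "y \<in> S" "z \<in> S" by blast
    thus "\<forall>x\<in>S. \<theta> h (nu x) = nu (h x)" using gens fpermQ by simp
  qed
  have carr: "\<And>h. h \<in> generate (BijGroup S) (carrier (BijGroup S) \<inter> {fperm S m y z |y z. y \<in> S \<and> z \<in> S})
     \<Longrightarrow> h \<in> carrier (GS S m)"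
    by (simp add: GS_def carrier_subgroup_generated)
  show ?thesis using g unfolding GS_def carrier_subgroup_generated
  proof (induction rule: generate.induct)
    case one
    have "\<theta> \<one>\<^bsub>GS S m\<^esub> = \<one>\<^bsub>GS Qc mQl\<^esub>" using group_hom.hom_one[OF GH] .
    hence th1: "\<theta> (\<lambda>x\<in>S. x) = (\<lambda>w\<in>nu ` S. w)" by (simp add: GS_def BijGroup_def Qc_eq)
    have "\<one>\<^bsub>BijGroup S\<^esub> = (\<lambda>x\<in>S. x)" by (simp add: BijGroup_def)
    thus ?case using th1 by (simp add: restrict_def)
  next
    case (incl h) thus ?case using gen_case by blast
  next
    case (inv h)
    have hB: "h \<in> Bij S" using inv by (simp add: carrier_Bij)
    have hG: "h \<in> carrier (GS S m)" using carr generate.incl[OF inv] by blast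
    have ih: "\<forall>x\<in>S. \<theta> h (nu x) = nu (h x)" using gen_case inv by blast
    have thG: "\<theta> h \<in> carrier (GS Qc mQl)" using hom hG by (auto simp: hom_def)
    have "inv\<^bsub>BijGroup S\<^esub> h = inv\<^bsub>GS S m\<^esub> h"
      using group.inv_subgroup_generated[OF group_BijGroup hG[unfolded GS_def]] by (simp add: GS_def)
    hence "\<theta> (inv\<^bsub>BijGroup S\<^esub> h) = inv\<^bsub>GS Qc mQl\<^esub> (\<theta> h)"
      using group_hom.hom_inv[OF GH hG] by simp
    also have "\<dots> = inv\<^bsub>BijGroup Qc\<^esub> (\<theta> h)"
      using group.inv_subgroup_generated[OF group_BijGroup thG[unfolded GS_def]] by (simp add: GS_def)
    finally have th: "\<theta> (inv\<^bsub>BijGroup S\<^esub> h) = inv\<^bsub>BijGroup Qc\<^esub> (\<theta> h)" .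
    show ?case
    proof
      fix x assume x: "x \<in> S"
      let ?x' = "(inv\<^bsub>BijGroup S\<^esub> h) x"
      have x': "?x' \<in> S" "h ?x' = x" using Bij_inv_app[OF hB x] by auto
      have "\<theta> h (nu ?x') = nu x" using ih x' by simp
      hence "(inv\<^bsub>BijGroup Qc\<^esub> (\<theta> h)) (nu x) = nu ?x'"
        using Bij_inv_eq[OF BQ[OF thG], of "nu x" "nu ?x'"] x x' by (simp add: Qc_eq)
      thus "\<theta> (inv\<^bsub>BijGroup S\<^esub> h) (nu x) = nu (?x')" using th by simp
    qed
  next
    case (eng h1 h2)
    have G: "h1 \<in> carrier (GS S m)" "h2 \<in> carrier (GS S m)" using eng.hyps carr by auto
    have B: "h1 \<in> Bij S" "h2 \<in> Bij S" using G GS_Bij by auto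
    have TG: "\<theta> h1 \<in> carrier (GS Qc mQl)" "\<theta> h2 \<in> carrier (GS Qc mQl)" using hom G by (auto simp: hom_def)
    have "\<theta> (h1 \<otimes>\<^bsub>GS S m\<^esub> h2) = \<theta> h1 \<otimes>\<^bsub>GS Qc mQl\<^esub> \<theta> h2"
      using hom G by (simp add: hom_mult)
    hence "\<theta> (h1 \<otimes>\<^bsub>BijGroup S\<^esub> h2) = compose Qc (\<theta> h1) (\<theta> h2)"
      using BQ[OF TG(1)] BQ[OF TG(2)] by (simp add: GS_def Bij_mult)
    hence th: "\<theta> (h1 \<otimes>\<^bsub>BijGroup S\<^esub> h2) = (\<lambda>w\<in>nu ` S. \<theta> h1 (\<theta> h2 w))"
      by (simp add: compose_def Qc_eq)
    show ?case
    proof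
      fix x assume x: "x \<in> S"
      have "\<theta> (h1 \<otimes>\<^bsub>BijGroup S\<^esub> h2) (nu x) = \<theta> h1 (\<theta> h2 (nu x))" using th x by simp
      also have "\<dots> = nu (h1 (h2 x))" using eng.IH B Bij_app x by simp
      also have "h1 (h2 x) = (h1 \<otimes>\<^bsub>BijGroup S\<^esub> h2) x" using B x by (simp add: Bij_mult compose_def)
      finally show "\<theta> (h1 \<otimes>\<^bsub>BijGroup S\<^esub> h2) (nu x) = nu ((h1 \<otimes>\<^bsub>BijGroup S\<^esub> h2) x)" .
    qed
  qed
qed


lemma group_P: "group (prod_copies I Zs m e)"
proof (rule groupI)
  let ?P = "prod_copies I Zs m e"
  have c: "carrier ?P = (\<Pi>\<^sub>E a\<in>I. Zs)" and mu: "\<And>g h. g \<otimes>\<^bsub>?P\<^esub> h = (\<lambda>a\<in>I. m (g a) (h a))"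
    and o: "\<one>\<^bsub>?P\<^esub> = (\<lambda>a\<in>I. e)" by (simp_all add: prod_copies_def)
  fix x y assume x: "x \<in> carrier ?P" and y: "y \<in> carrier ?P"
  thus "x \<otimes>\<^bsub>?P\<^esub> y \<in> carrier ?P" unfolding c mu using Zs_mult by auto
next
  show "\<one>\<^bsub>prod_copies I Zs m e\<^esub> \<in> carrier (prod_copies I Zs m e)" by (simp add: prod_copies_def)
next
  fix x y z assume x: "x \<in> carrier (prod_copies I Zs m e)" and y: "y \<in> carrier (prod_copies I Zs m e)"
    and z: "z \<in> carrier (prod_copies I Zs m e)"
  have "\<And>a. a \<in> I \<Longrightarrow> m (m (x a) (y a)) (z a) = m (x a) (m (y a) (z a))"
    using x y z A1 Zs_S by (auto simp: prod_copies_def PiE_iff)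
  thus "x \<otimes>\<^bsub>prod_copies I Zs m e\<^esub> y \<otimes>\<^bsub>prod_copies I Zs m e\<^esub> z =
           x \<otimes>\<^bsub>prod_copies I Zs m e\<^esub> (y \<otimes>\<^bsub>prod_copies I Zs m e\<^esub> z)"
    by (auto simp: prod_copies_def)
next
  fix x assume x: "x \<in> carrier (prod_copies I Zs m e)"
  show "\<one>\<^bsub>prod_copies I Zs m e\<^esub> \<otimes>\<^bsub>prod_copies I Zs m e\<^esub> x = x"
  proof (rule ext)
    fix a show "(\<one>\<^bsub>prod_copies I Zs m e\<^esub> \<otimes>\<^bsub>prod_copies I Zs m e\<^esub> x) a = x a"
      using x Zs_S by (cases "a \<in> I") (auto simp: prod_copies_def PiE_iff extensional_def)
  qed
  show "\<exists>y\<in>carrier (prod_copies I Zs m e). y \<otimes>\<^bsub>prod_copies I Zs m e\<^esub> x = \<one>\<^bsub>prod_copies I Zs m e\<^esub>"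
  proof (intro bexI)
    show "(\<lambda>a\<in>I. zinv (x a)) \<in> carrier (prod_copies I Zs m e)"
      using x zinv by (auto simp: prod_copies_def PiE_iff)
    show "(\<lambda>a\<in>I. zinv (x a)) \<otimes>\<^bsub>prod_copies I Zs m e\<^esub> x = \<one>\<^bsub>prod_copies I Zs m e\<^esub>"
      using x zinv by (auto simp: prod_copies_def PiE_iff)
  qed
qed


lemma main:
  assumes hom: "\<theta> \<in> hom (GS S m) (GS Qc mQl)"
    and gens: "\<And>y z. y \<in> S \<Longrightarrow> z \<in> S \<Longrightarrow> \<theta> (fperm S m y z) = fperm Qc mQl (nu y) (nu z)"
  shows "\<exists>(\<A> :: 'a set set) H. subgroup H (prod_copies \<A> Zs m e)
           \<and> (GS S m)\<lparr>carrier := kernel (GS S m) (GS Qc mQl) \<theta>\<rparr>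
               \<cong> (prod_copies \<A> Zs m e)\<lparr>carrier := H\<rparr>"
proof -
  let ?K = "kernel (GS S m) (GS Qc mQl) \<theta>"
  let ?P = "prod_copies Qc Zs m e"
  define rep where "rep A = (SOME x. x \<in> S \<and> A = nu x)" for A
  define phi where "phi g = (\<lambda>A\<in>Qc. rdiv S m (g (rep A)) (rep A))" for g :: "'a \<Rightarrow> 'a"
  have G1: "group (GS S m)" unfolding GS_def by (rule group.group_subgroup_generated[OF group_BijGroup])
  have G2: "group (GS Qc mQl)" unfolding GS_def by (rule group.group_subgroup_generated[OF group_BijGroup])
  have GH: "group_hom (GS S m) (GS Qc mQl) \<theta>"
    using G1 G2 hom by (simp add: group_hom_def group_hom_axioms_def)
  have rep: "\<And>A. A \<in> Qc \<Longrightarrow> rep A \<in> S \<and> A = nu (rep A)"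
  proof -
    fix A assume "A \<in> Qc"
    then obtain x where "x \<in> S" "A = nu x" by (auto simp: Qc_eq)
    thus "rep A \<in> S \<and> A = nu (rep A)" unfolding rep_def by (rule someI[of _ x, OF conjI])
  qed
  have Kc: "\<And>g. g \<in> ?K \<Longrightarrow> g \<in> carrier (GS S m) \<and> \<theta> g = (\<lambda>w\<in>Qc. w)"
    by (simp add: kernel_def GS_def BijGroup_def)
  have KB: "\<And>g. g \<in> ?K \<Longrightarrow> g \<in> Bij S" using Kc GS_Bij by blast
  have Kmov: "\<And>g x. g \<in> ?K \<Longrightarrow> x \<in> S \<Longrightarrow> \<exists>t. t \<in> Zs \<and> g x = m t x \<and> rdiv S m (g x) x = t"
  proof -
    fix g x assume g: "g \<in> ?K" and x: "x \<in> S"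
    have gx: "g x \<in> S" using KB[OF g] x Bij_app by blast
    have "\<theta> g (nu x) = nu (g x)" using theta_rel[OF hom gens] Kc[OF g] x by blast
    moreover have "\<theta> g (nu x) = nu x" using Kc[OF g] x by (simp add: Qc_eq)
    ultimately have "nu x = nu (g x)" by simp
    then obtain t where t: "t \<in> Zs" "g x = m t x" using nu_eq_iff[OF x gx] by blast
    have "rdiv S m (g x) x = t" using rdiv_unique[of x t "g x"] t x Zs_S by simp
    thus "\<exists>t. t \<in> Zs \<and> g x = m t x \<and> rdiv S m (g x) x = t" using t by blast
  qed
  have phiP: "\<And>g. g \<in> ?K \<Longrightarrow> phi g \<in> carrier ?P"
  proof -
    fix g assume g: "g \<in> ?K"
    have "\<forall>A\<in>Qc. rdiv S m (g (rep A)) (rep A) \<in> Zs"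
    proof
      fix A assume "A \<in> Qc"
      hence "rep A \<in> S" using rep by blast
      then obtain t where "t \<in> Zs" "rdiv S m (g (rep A)) (rep A) = t" using Kmov[OF g] by blast
      thus "rdiv S m (g (rep A)) (rep A) \<in> Zs" by simp
    qed
    thus "phi g \<in> carrier ?P" by (simp add: phi_def prod_copies_def)
  qed
  have phimult: "\<And>g h. g \<in> ?K \<Longrightarrow> h \<in> ?K \<Longrightarrow> phi (g \<otimes>\<^bsub>GS S m\<^esub> h) = phi g \<otimes>\<^bsub>?P\<^esub> phi h"
  proof -
    fix g h assume g: "g \<in> ?K" and h: "h \<in> ?K"
    have gh: "g \<otimes>\<^bsub>GS S m\<^esub> h = compose S g h" using KB[OF g] KB[OF h] by (simp add: GS_def Bij_mult)
    show "phi (g \<otimes>\<^bsub>GS S m\<^esub> h) = phi g \<otimes>\<^bsub>?P\<^esub> phi h"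
    proof (rule ext)
      fix A
      show "phi (g \<otimes>\<^bsub>GS S m\<^esub> h) A = (phi g \<otimes>\<^bsub>?P\<^esub> phi h) A"
      proof (cases "A \<in> Qc")
        case False thus ?thesis by (simp add: phi_def prod_copies_def)
      next
        case True
        let ?r = "rep A"
        have r: "?r \<in> S" using rep True by blast
        obtain s where s: "s \<in> Zs" "h ?r = m s ?r" "rdiv S m (h ?r) ?r = s" using Kmov[OF h r] by blast
        obtain t where t: "t \<in> Zs" "g ?r = m t ?r" "rdiv S m (g ?r) ?r = t" using Kmov[OF g r] by blast
        let ?s = s and ?t = t
        have "compose S g h ?r = g (m ?s ?r)" using r s by (simp add: compose_def)
        also have "\<dots> = m ?s (g ?r)" using comm_G Kc[OF g] s r by blast
        also have "\<dots> = m (m ?s ?t) ?r" using A1[of ?s ?t ?r] s t r Zs_S by simp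
        finally have c: "compose S g h ?r = m (m ?s ?t) ?r" .
        have "phi (g \<otimes>\<^bsub>GS S m\<^esub> h) A = m ?s ?t"
          using True gh c rdiv_unique[of ?r "m ?s ?t"] r s t Zs_S Zs_mult by (simp add: phi_def)
        also have "\<dots> = m ?t ?s" using comm[of ?s ?t] s t Zs_S by simp
        also have "\<dots> = (phi g \<otimes>\<^bsub>?P\<^esub> phi h) A" using True s(3) t(3) by (simp add: phi_def prod_copies_def)
        finally show ?thesis .
      qed
    qed
  qed
  have phiinj: "inj_on phi ?K"
  proof (rule inj_onI)
    fix g h assume g: "g \<in> ?K" and h: "h \<in> ?K" and eq: "phi g = phi h"
    show "g = h"
    proof (rule extensionalityI[of _ S])
      show "g \<in> extensional S" "h \<in> extensional S" using KB[OF g] KB[OF h] Bij_imp_extensional by auto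
      fix x assume x: "x \<in> S"
      let ?A = "nu x"
      have A: "?A \<in> Qc" using x by (simp add: Qc_eq)
      obtain r where rdef: "rep ?A = r" by simp
      have r: "r \<in> S" "nu r = nu x" using rep[OF A] rdef by auto
      then obtain u where u: "u \<in> Zs" "x = m u r" using nu_eq_iff[OF r(1) x] by blast
      have pg: "phi g ?A = rdiv S m (g r) r" "phi h ?A = rdiv S m (h r) r" using A rdef by (simp_all add: phi_def)
      obtain t1 where t1: "t1 \<in> Zs" "g r = m t1 r" "rdiv S m (g r) r = t1" using Kmov[OF g r(1)] by blast
      obtain t2 where t2: "t2 \<in> Zs" "h r = m t2 r" "rdiv S m (h r) r = t2" using Kmov[OF h r(1)] by blast
      have "t1 = t2" using eq pg t1 t2 by simp
      have cg: "g (m u r) = m u (g r)" using comm_G Kc[OF g] u r by blast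
      have ch: "h (m u r) = m u (h r)" using comm_G Kc[OF h] u r by blast
      show "g x = h x" using cg ch u(2) t1 t2 \<open>t1 = t2\<close> by simp
    qed
  qed
  have subK: "subgroup ?K (GS S m)" by (rule group_hom.subgroup_kernel[OF GH])
  let ?GK = "(GS S m)\<lparr>carrier := ?K\<rparr>"
  have grpK: "group ?GK" by (rule subgroup.subgroup_is_group[OF subK G1])
  have hom1: "phi \<in> hom ?GK ?P" using phiP phimult by (auto simp: hom_def)
  have GHK: "group_hom ?GK ?P phi" using grpK group_P hom1 by (simp add: group_hom_def group_hom_axioms_def)
  have sub: "subgroup (phi ` ?K) ?P" using group_hom.img_is_subgroup[OF GHK] by simp
  have "phi \<in> iso ?GK (?P\<lparr>carrier := phi ` ?K\<rparr>)"
    unfolding iso_iff using phimult phiinj by (auto simp: hom_def prod_copies_def)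
  hence "?GK \<cong> ?P\<lparr>carrier := phi ` ?K\<rparr>" by (rule is_isoI)
  thus ?thesis using sub by blast
qed

end

theorem mainTheorem12:
  fixes S :: "'a set" and m :: "'a \<Rightarrow> 'a \<Rightarrow> 'a" and e :: "'a"
    and \<theta> :: "('a \<Rightarrow> 'a) \<Rightarrow> ('a set \<Rightarrow> 'a set)"
  defines "Z \<equiv> center S m e"
  defines "Q \<equiv> quot_carrier S m Z"
  defines "mQ \<equiv> quot_mult S m Z"
  defines "\<nu> \<equiv> rcoset m Z"
  assumes loop: "right_loop S m e"
    and hom: "\<theta> \<in> hom (GS S m) (GS Q mQ)"
    and gens: "\<And>y z. y \<in> S \<Longrightarrow> z \<in> S \<Longrightarrow> \<theta> (fperm S m y z) = fperm Q mQ (\<nu> y) (\<nu> z)"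
  shows "\<exists>(\<A> :: 'a set set) H. subgroup H (prod_copies \<A> Z m e)
           \<and> (GS S m)\<lparr>carrier := kernel (GS S m) (GS Q mQ) \<theta>\<rparr>
               \<cong> (prod_copies \<A> Z m e)\<lparr>carrier := H\<rparr>"
proof -
  interpret R: rl S m e by (rule rl.intro[OF loop])
  have Zeq: "Z = R.Zs" unfolding Z_def by (rule R.center_eq)
  have h1: "\<theta> \<in> hom (GS S m) (GS (quot_carrier S m R.Zs) (quot_mult S m R.Zs))"
    using hom unfolding Q_def mQ_def Zeq .
  have h2: "\<And>y z. y \<in> S \<Longrightarrow> z \<in> S \<Longrightarrow> \<theta> (fperm S m y z) =
      fperm (quot_carrier S m R.Zs) (quot_mult S m R.Zs) (rcoset m R.Zs y) (rcoset m R.Zs z)"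
    using gens unfolding Q_def mQ_def \<nu>_def Zeq .
  show ?thesis using R.main[OF h1 h2] unfolding Q_def mQ_def Zeq .
qed

end
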